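(* Let $X$ be a topological space with a compatible metric $d$ and $T\colon X\to X$ continuous. Then $h(T)\le h^B_d(T)\le h^d(T)$.
   Context: For covers $\mathcal A,\mathcal B$ of $X$, $\mathcal A\vee\mathcal B=\{A\cap B:A\in\mathcal A,B\in\mathcal B,A\cap B\ne\emptyset\}$, $\mathcal A^n=\mathcal A\vee T^{-1}(\mathcal A)\vee\dots\vee T^{-(n-1)}(\mathcal A)$; $N(\mathcal A)$ is the least cardinality of a subcover and $N_K(\mathcal A)$ the least cardinality of a subfamily whose union contains $K$. An open cover is admissible if at least one of its elements has compact complement; $h(T)=\sup\{\lim_n\frac1n\log N(\mathcal A^n):\mathcal A\text{ admissible open cover}\}$. $d_n(x,y)=\max_{0\le j<n}d(T^jx,T^jy)$, $\mathcal B_{d_n}(\varepsilon)$ is the family of open $d_n$-balls of radius $\varepsilon$ centered at points of $X$; $h^d(T)=\sup_{\varepsilon>0}\lim_n\frac1n\log N(\mathcal B_{d_n}(\varepsilon))$ and $h^B_d(T)=\sup_{\varepsilon>0,K\text{ compact}}\limsup_n\frac1n\log N_K(\mathcal B_{d_n}(\varepsilon))$. *)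

theory Defs
  imports "HOL-Analysis.Analysis"
begin

definition cover_join :: "'a set set \<Rightarrow> 'a set set \<Rightarrow> 'a set set" where
  "cover_join A B = {a \<inter> b | a b. a \<in> A \<and> b \<in> B \<and> a \<inter> b \<noteq> {}}"

definition cover_preimage :: "('a \<Rightarrow> 'a) \<Rightarrow> 'a set set \<Rightarrow> 'a set set" where
  "cover_preimage f A = (\<lambda>U. f -` U) ` A"

text \<open>A^n = A v T^-1 A v ... v T^-(n-1) A  (for n >= 1; the value at n = 0 is irrelevant).\<close>
fun cover_pow :: "('a \<Rightarrow> 'a) \<Rightarrow> 'a set set \<Rightarrow> nat \<Rightarrow> 'a set set" where
  "cover_pow T A 0 = {UNIV}"
| "cover_pow T A (Suc 0) = A"
| "cover_pow T A (Suc (Suc n)) =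
     cover_join (cover_pow T A (Suc n)) (cover_preimage (T ^^ Suc n) A)"

definition ecard :: "'b set \<Rightarrow> ereal" where
  "ecard B = (if finite B then ereal (real (card B)) else \<infinity>)"

definition N_K :: "'a set \<Rightarrow> 'a set set \<Rightarrow> ereal" where
  "N_K K A = (INF B \<in> {B. B \<subseteq> A \<and> K \<subseteq> \<Union>B}. ecard B)"

definition N_cov :: "'a set set \<Rightarrow> ereal" where
  "N_cov A = N_K UNIV A"

definition elog :: "ereal \<Rightarrow> ereal" where
  "elog x = (if x = \<infinity> then \<infinity> else if x \<le> 0 then - \<infinity> else ereal (ln (real_of_ereal x)))"

definition admissible_cover :: "'a::topological_space set set \<Rightarrow> bool" where
  "admissible_cover A \<longleftrightarrow> (\<forall>U\<in>A. open U) \<and> \<Union>A = UNIV \<and> (\<exists>U\<in>A. compact (- U))"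

definition top_entropy :: "('a::topological_space \<Rightarrow> 'a) \<Rightarrow> ereal" where
  "top_entropy T = (SUP A \<in> {A. admissible_cover A}.
      lim (\<lambda>n. elog (N_cov (cover_pow T A n)) / ereal (real n)))"

definition bowen_dist :: "('a \<Rightarrow> 'a \<Rightarrow> real) \<Rightarrow> ('a \<Rightarrow> 'a) \<Rightarrow> nat \<Rightarrow> 'a \<Rightarrow> 'a \<Rightarrow> real" where
  "bowen_dist d T n x y = (MAX j \<in> {..<n}. d ((T ^^ j) x) ((T ^^ j) y))"

definition bowen_balls :: "('a \<Rightarrow> 'a \<Rightarrow> real) \<Rightarrow> ('a \<Rightarrow> 'a) \<Rightarrow> nat \<Rightarrow> real \<Rightarrow> 'a set set" where
  "bowen_balls d T n e = {{y. bowen_dist d T n x y < e} | x. True}"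

definition metric_entropy :: "('a \<Rightarrow> 'a \<Rightarrow> real) \<Rightarrow> ('a \<Rightarrow> 'a) \<Rightarrow> ereal" where
  "metric_entropy d T = (SUP e \<in> {0<..}.
      limsup (\<lambda>n. elog (N_cov (bowen_balls d T n e)) / ereal (real n)))"

definition bowen_entropy :: "('a::topological_space \<Rightarrow> 'a \<Rightarrow> real) \<Rightarrow> ('a \<Rightarrow> 'a) \<Rightarrow> ereal" where
  "bowen_entropy d T = (SUP (e, K) \<in> {0<..} \<times> {K. compact K}.
      limsup (\<lambda>n. elog (N_K K (bowen_balls d T n e)) / ereal (real n)))"

end

theory Submission
  imports Defs
begin

lemma cover_pow_L1:
  "S \<in> cover_pow T A (Suc n) \<Longrightarrow> \<exists>f. (\<forall>i<Suc n. f i \<in> A) \<and> S = (\<Inter>i<Suc n. (T^^i) -` f i)"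
proof (induction n arbitrary: S)
  case 0
  then show ?case by (intro exI[of _ "\<lambda>_. S"]) auto
next
  case (Suc n)
  from Suc.prems obtain a b where ab: "S = a \<inter> b" "a \<in> cover_pow T A (Suc n)"
      "b \<in> cover_preimage (T ^^ Suc n) A"
    by (auto simp: cover_join_def)
  from ab(3) obtain c where c: "c \<in> A" "b = (T^^Suc n) -` c" by (auto simp: cover_preimage_def)
  from Suc.IH[OF ab(2)] obtain f where f: "\<forall>i<Suc n. f i \<in> A" "a = (\<Inter>i<Suc n. (T^^i) -` f i)" by blast
  have eq: "(\<Inter>i<Suc n. (T^^i) -` (f(Suc n := c)) i) = (\<Inter>i<Suc n. (T^^i) -` f i)"
    by (intro INF_cong) auto
  have split: "(\<Inter>i<Suc (Suc n). (T^^i) -` (f(Suc n := c)) i) =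
      (\<Inter>i<Suc n. (T^^i) -` (f(Suc n := c)) i) \<inter> (T^^Suc n) -` c"
    by (simp add: lessThan_Suc Int_commute)
  have "S = (\<Inter>i<Suc (Suc n). (T^^i) -` (f(Suc n := c)) i)"
    unfolding split eq using ab(1) c(2) f(2) by simp
  moreover have "\<forall>i<Suc (Suc n). (f(Suc n := c)) i \<in> A"
    using f(1) c(1) by (simp add: less_Suc_eq)
  ultimately show ?case by blast
qed

lemma cover_pow_L2:
  "(\<forall>i<Suc n. f i \<in> A) \<Longrightarrow> (\<Inter>i<Suc n. (T^^i) -` f i) \<noteq> {} \<Longrightarrow>
    (\<Inter>i<Suc n. (T^^i) -` f i) \<in> cover_pow T A (Suc n)"
proof (induction n)
  case 0
  then show ?case by (auto simp: lessThan_Suc)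
next
  case (Suc n)
  have split: "(\<Inter>i<Suc (Suc n). (T^^i) -` f i) = (\<Inter>i<Suc n. (T^^i) -` f i) \<inter> (T^^Suc n) -` f (Suc n)"
    by (auto simp: lessThan_Suc)
  have "(\<Inter>i<Suc n. (T^^i) -` f i) \<in> cover_pow T A (Suc n)"
    using Suc by (intro Suc.IH) (auto simp: split)
  moreover have "(T^^Suc n) -` f (Suc n) \<in> cover_preimage (T ^^ Suc n) A"
    using Suc.prems by (auto simp: cover_preimage_def)
  ultimately show ?case using Suc.prems(2) unfolding split
    by (auto simp: cover_join_def)
qed

lemma N_K_le: "B \<subseteq> A \<Longrightarrow> K \<subseteq> \<Union>B \<Longrightarrow> N_K K A \<le> ecard B"
  unfolding N_K_def by (rule INF_lower) auto

lemma N_K_attained: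
  assumes "N_K K A \<noteq> \<infinity>"
  shows "\<exists>B. B \<subseteq> A \<and> K \<subseteq> \<Union>B \<and> finite B \<and> N_K K A = ereal (card B)"
proof -
  define P where "P B \<longleftrightarrow> B \<subseteq> A \<and> K \<subseteq> \<Union>B \<and> finite B" for B
  have ex: "\<exists>B. P B"
  proof (rule ccontr)
    assume "\<not> (\<exists>B. P B)"
    then have "\<forall>B\<in>{B. B \<subseteq> A \<and> K \<subseteq> \<Union>B}. ecard B = \<infinity>"
      by (auto simp: P_def ecard_def)
    then have "\<infinity> \<le> N_K K A" unfolding N_K_def by (intro INF_greatest) auto
    then have "N_K K A = \<infinity>" by simp
    with assms show False by simp
  qed
  define k where "k = (LEAST k. \<exists>B. P B \<and> card B = k)"
  have "\<exists>B. P B \<and> card B = k" unfolding k_def by (rule LeastI_ex) (use ex in blast)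
  then obtain B0 where B0: "P B0" "card B0 = k" by blast
  have "N_K K A = ereal k"
  proof (rule antisym)
    show "N_K K A \<le> ereal k" using N_K_le[of B0 A K] B0 by (auto simp: P_def ecard_def)
    show "ereal k \<le> N_K K A" unfolding N_K_def
    proof (rule INF_greatest)
      fix B assume B: "B \<in> {B. B \<subseteq> A \<and> K \<subseteq> \<Union>B}"
      show "ereal k \<le> ecard B"
      proof (cases "finite B")
        case True
        then have "P B" using B by (auto simp: P_def)
        then have "k \<le> card B" unfolding k_def by (intro Least_le) blast
        then show ?thesis using True by (simp add: ecard_def)
      qed (simp add: ecard_def)
    qed
  qed
  then show ?thesis using B0 by (auto simp: P_def)
qed

lemma ecard_image_le: "ecard (g ` B) \<le> ecard B"
  by (auto simp: ecard_def card_image_le)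

lemma N_K_mono_refine:
  assumes "\<forall>b'\<in>A'. \<exists>b\<in>A. b' \<subseteq> b"
  shows "N_K K A \<le> N_K K A'"
  unfolding N_K_def[of K A']
proof (rule INF_greatest)
  fix B assume B: "B \<in> {B. B \<subseteq> A' \<and> K \<subseteq> \<Union>B}"
  define g where "g b' = (SOME b. b \<in> A \<and> b' \<subseteq> b)" for b'
  have g: "g b' \<in> A \<and> b' \<subseteq> g b'" if "b' \<in> B" for b'
    unfolding g_def by (rule someI_ex) (use assms B that in blast)
  have "N_K K A \<le> ecard (g ` B)"
    using B g by (intro N_K_le) blast+
  also have "\<dots> \<le> ecard B" by (rule ecard_image_le)
  finally show "N_K K A \<le> ecard B" .
qed

lemma N_K_superset_le: "K \<subseteq> K' \<Longrightarrow> N_K K A \<le> N_K K' A"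
  unfolding N_K_def by (rule INF_superset_mono) auto

lemma N_K_ge1: assumes "K \<noteq> {}" shows "1 \<le> N_K K A"
  unfolding N_K_def
proof (rule INF_greatest)
  fix B assume B: "B \<in> {B. B \<subseteq> A \<and> K \<subseteq> \<Union>B}"
  then have "B \<noteq> {}" using assms by auto
  then show "1 \<le> ecard B" by (auto simp: ecard_def card_gt_0_iff Suc_le_eq)
qed

lemma N_cov_0: fixes T :: "'a \<Rightarrow> 'a" shows "N_cov (cover_pow T A 0) = 1"
proof (rule antisym)
  show "N_cov (cover_pow T A 0) \<le> 1" unfolding N_cov_def
    using N_K_le[of "{UNIV::'a set}" "{UNIV}" UNIV] by (simp add: ecard_def) (metis one_ereal_def)
  show "1 \<le> N_cov (cover_pow T A 0)" unfolding N_cov_def by (rule N_K_ge1) simp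
qed

lemma elog_mono: "x \<le> y \<Longrightarrow> elog x \<le> elog y"
  by (cases x; cases y) (auto simp: elog_def)

lemma subadd_iter:
  fixes u :: "nat \<Rightarrow> real"
  assumes sub: "\<And>m n. u (m+n) \<le> u m + u n"
  shows "u (q*m + r) \<le> real q * u m + u r"
proof (induction q)
  case 0 then show ?case by simp
next
  case (Suc q)
  have "u (Suc q * m + r) = u (m + (q*m + r))" by (simp add: add.assoc)
  also have "\<dots> \<le> u m + u (q*m + r)" by (rule sub)
  also have "\<dots> \<le> u m + (real q * u m + u r)" using Suc by simp
  finally show ?case by (simp add: algebra_simps)
qed

lemma fekete:
  fixes u :: "nat \<Rightarrow> real"
  assumes sub: "\<And>m n. u (m+n) \<le> u m + u n" and nn: "\<And>n. u n \<ge> 0"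
  shows "convergent (\<lambda>n. u n / real n)"
proof -
  define L where "L = Inf ((\<lambda>n. u n / real n) ` {1..})"
  have bdd: "bdd_below ((\<lambda>n. u n / real n) ` {1..})"
    using nn by (intro bdd_belowI[of _ 0]) auto
  have low: "L \<le> u n / real n" if "n \<ge> 1" for n
    unfolding L_def using that bdd by (intro cInf_lower) auto
  have "(\<lambda>n. u n / real n) \<longlonglongrightarrow> L"
  proof (rule LIMSEQ_I)
    fix r :: real assume r: "0 < r"
    have "L < L + r/2" using r by simp
    then obtain m where m: "m \<ge> 1" "u m / real m < L + r/2"
      unfolding L_def by (subst (asm) cInf_less_iff[OF _ bdd]) auto
    define M where "M = Max (u ` {..<m})"
    have M: "u k \<le> M" if "k < m" for k unfolding M_def using that by (intro Max_ge) auto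
    have M0: "0 \<le> M" using M[of 0] nn[of 0] m by simp
    obtain N :: nat where N: "real N > 2 * M / r" using reals_Archimedean2 by blast
    show "\<exists>no. \<forall>n\<ge>no. norm (u n / real n - L) < r"
    proof (intro exI allI impI)
      fix n assume n: "n \<ge> max m (Suc N)"
      then have n1: "n \<ge> 1" and nm: "n \<ge> m" by auto
      have npos: "real n > 0" using n1 by simp
      define q where "q = n div m"
      define rr where "rr = n mod m"
      have nq: "n = q * m + rr" unfolding q_def rr_def by simp
      have rr: "rr < m" unfolding rr_def using m by simp
      have qm: "real q * real m \<le> real n" using nq by (metis le_add1 of_nat_le_iff of_nat_mult)
      have un: "u n \<le> real q * u m + M" using subadd_iter[OF sub, of q m rr] nq M[OF rr] by simp
      have mpos: "real m > 0" using m(1) by simp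
      have t1: "real q * u m / real n \<le> u m / real m"
      proof -
        have "u m * (real q * real m) \<le> u m * real n" by (rule mult_left_mono[OF qm nn])
        then have "(u m * (real q * real m)) / (real n * real m) \<le> (u m * real n) / (real n * real m)"
          using npos mpos by (intro divide_right_mono) auto
        moreover have "(u m * (real q * real m)) / (real n * real m) = real q * u m / real n"
          using mpos npos by simp
        moreover have "(u m * real n) / (real n * real m) = u m / real m"
          using mpos npos by simp
        ultimately show ?thesis by simp
      qed
      have t2: "M / real n < r / 2"
      proof -
        have "real n > 2 * M / r" using N n by simp
        then have "2 * M < r * real n" using r by (simp add: pos_divide_less_eq mult.commute)
        then show ?thesis using npos by (simp add: divide_less_eq)
      qed
      have "u n / real n \<le> (real q * u m + M) / real n" using un npos by (simp add: divide_right_mono)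
      also have "\<dots> = real q * u m / real n + M / real n" by (rule add_divide_distrib)
      finally have "u n / real n < L + r" using t1 t2 m(2) by linarith
      moreover have "L \<le> u n / real n" using low n1 by simp
      ultimately show "norm (u n / real n - L) < r" by simp
    qed
  qed
  then show ?thesis by (auto simp: convergent_def)
qed

lemma bowen_mem:
  assumes "m \<ge> 1"
  shows "bowen_dist d T m x y < e \<longleftrightarrow> (\<forall>i<m. d ((T^^i) x) ((T^^i) y) < e)"
proof -
  have "{..<m} \<noteq> {}" using assms by (auto simp: lessThan_empty_iff)
  then show ?thesis unfolding bowen_dist_def by (subst Max_less_iff) auto
qed

lemma bowen_ball_antimono:
  assumes "m \<ge> 1"
  shows "{y. bowen_dist d T (Suc m) x y < e} \<subseteq> {y. bowen_dist d T m x y < e}"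
  using assms by (auto simp: bowen_mem)

lemma N_K_bowen_Suc:
  assumes "m \<ge> 1"
  shows "N_K K (bowen_balls d T m e) \<le> N_K K (bowen_balls d T (Suc m) e)"
proof (rule N_K_mono_refine, rule ballI)
  fix b' assume "b' \<in> bowen_balls d T (Suc m) e"
  then obtain x where "b' = {y. bowen_dist d T (Suc m) x y < e}" by (auto simp: bowen_balls_def)
  then show "\<exists>b\<in>bowen_balls d T m e. b' \<subseteq> b"
    using bowen_ball_antimono[OF assms, of d T x e] by (auto simp: bowen_balls_def)
qed

lemma N_K_bowen_mono:
  assumes "1 \<le> m" "m \<le> n"
  shows "N_K K (bowen_balls d T m e) \<le> N_K K (bowen_balls d T n e)"
  using assms(2)
proof (induction n rule: dec_induct)
  case base then show ?case by simp
next
  case (step k)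
  have k1: "1 \<le> k" using assms(1) step.hyps(1) by simp
  show ?case by (rule order.trans[OF step.IH N_K_bowen_Suc[OF k1]])
qed

lemma lebesgue:
  assumes ms: "Metric_space UNIV d" and top: "Metric_space.mtopology UNIV d = euclidean"
    and K: "compact K" "K \<noteq> {}" and A: "\<forall>V\<in>A. open V" "\<Union>A = UNIV"
    and U: "U \<in> A" "-K \<subseteq> U"
  shows "\<exists>\<delta>>0. \<forall>x. \<exists>V\<in>A. {y. d x y < \<delta>} \<subseteq> V"
proof -
  interpret m: Metric_space UNIV d by (rule ms)
  have op: "open S \<longleftrightarrow> openin m.mtopology S" for S by (simp add: top)
  have "\<exists>r V. r > 0 \<and> V \<in> A \<and> m.mball z r \<subseteq> V" for z
  proof -
    have "z \<in> \<Union>A" using A(2) by simp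
    then obtain V where V: "V \<in> A" "z \<in> V" by blast
    then have "openin m.mtopology V" using A(1) op by auto
    then obtain r where "r > 0" "m.mball z r \<subseteq> V" using V(2) m.openin_mtopology by blast
    then show ?thesis using V by blast
  qed
  then obtain R W where RW: "\<And>z. R z > 0 \<and> W z \<in> A \<and> m.mball z (R z) \<subseteq> W z" by metis
  have opb: "open (m.mball z (R z / 2))" for z using op m.openin_mball by blast
  have cov: "K \<subseteq> (\<Union>z\<in>K. m.mball z (R z / 2))" using RW by auto
  obtain F where F: "F \<subseteq> K" "finite F" "K \<subseteq> (\<Union>z\<in>F. m.mball z (R z / 2))"
    using compactE_image[OF K(1) opb cov] by blast
  have Fne: "F \<noteq> {}" using F K(2) by auto
  define \<delta> where "\<delta> = Min (R ` F) / 4"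
  have Rpos: "Min (R ` F) > 0" using F(2) Fne RW by (subst Min_gr_iff) auto
  have dle: "\<delta> \<le> R z / 4" if "z \<in> F" for z unfolding \<delta>_def using F(2) that by simp
  show ?thesis
  proof (intro exI conjI allI)
    show "\<delta> > 0" using Rpos by (simp add: \<delta>_def)
    fix x
    show "\<exists>V\<in>A. {y. d x y < \<delta>} \<subseteq> V"
    proof (cases "\<exists>w\<in>K. d x w < \<delta>")
      case True
      then obtain w where w: "w \<in> K" "d x w < \<delta>" by blast
      then obtain z where z: "z \<in> F" "d z w < R z / 2" using F(3) by auto
      have "{y. d x y < \<delta>} \<subseteq> W z"
      proof
        fix y assume y: "y \<in> {y. d x y < \<delta>}"
        have "d z y \<le> d z w + d w y" using m.triangle by simp
        also have "d w y \<le> d w x + d x y" using m.triangle by simp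
        also have "d w x = d x w" using m.commute by simp
        finally have "d z y < R z" using z w y dle[OF z(1)] by simp
        then show "y \<in> W z" using RW[of z] by auto
      qed
      then show ?thesis using RW by blast
    next
      case False
      then have "{y. d x y < \<delta>} \<subseteq> U" using U(2) by auto
      then show ?thesis using U(1) by blast
    qed
  qed
qed

lemma count_bound:
  fixes T :: "'a \<Rightarrow> 'a"
  assumes n: "n \<ge> 1"
    and F: "\<And>m. 1 \<le> m \<Longrightarrow> m \<le> n \<Longrightarrow> F m \<subseteq> bowen_balls d T m \<delta> \<and> K \<subseteq> \<Union>(F m) \<and> finite (F m)"
    and U: "U \<in> A" "-K \<subseteq> U"
    and W: "\<And>z. W z \<in> A \<and> {y. d z y < \<delta>} \<subseteq> W z"
  shows "\<exists>G. G \<subseteq> cover_pow T A n \<and> UNIV \<subseteq> \<Union>G \<and> finite G \<and>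
           card G \<le> 1 + (\<Sum>j<n. card (F (n-j)))"
proof -
  define ctr where "ctr m b = (SOME x. b = {y. bowen_dist d T m x y < \<delta>})" for m b
  have ctr: "b = {y. bowen_dist d T m (ctr m b) y < \<delta>}" if "b \<in> bowen_balls d T m \<delta>" for m b
    unfolding ctr_def by (rule someI_ex) (use that in \<open>auto simp: bowen_balls_def\<close>)
  define Wf where "Wf j b i = (if i < j then U else W ((T^^(i-j)) (ctr (n-j) b)))" for j b i
  define S where "S j b = (\<Inter>i<n. (T^^i) -` Wf j b i)" for j b
  define Sinf where "Sinf = (\<Inter>i<n. (T^^i) -` U)"
  define G where "G = ({Sinf} \<union> (\<Union>j<n. S j ` F (n-j))) - {{}}"
  obtain n' where n': "n = Suc n'" using n by (cases n) auto
  have WfA: "Wf j b i \<in> A" for j b i unfolding Wf_def using U W by auto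
  have sub: "G \<subseteq> cover_pow T A n"
  proof
    fix g assume g: "g \<in> G"
    then have gne: "g \<noteq> {}" by (auto simp: G_def)
    from g consider "g = Sinf" | j b where "g = S j b" by (auto simp: G_def)
    then show "g \<in> cover_pow T A n"
    proof cases
      case 1
      then show ?thesis using cover_pow_L2[of n' "\<lambda>_. U" A T] U gne
        unfolding n' Sinf_def by auto
    next
      case 2
      then show ?thesis using cover_pow_L2[of n' "Wf j b" A T] WfA gne
        unfolding n' S_def by auto
    qed
  qed
  have cov: "UNIV \<subseteq> \<Union>G"
  proof
    fix x :: 'a
    show "x \<in> \<Union>G"
    proof (cases "\<exists>i<n. (T^^i) x \<in> K")
      case False
      then have "x \<in> Sinf" using U(2) by (auto simp: Sinf_def)
      then show ?thesis by (auto simp: G_def)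
    next
      case True
      define j where "j = (LEAST i. i < n \<and> (T^^i) x \<in> K)"
      have j: "j < n" "(T^^j) x \<in> K" using LeastI_ex[OF True] unfolding j_def by auto
      have before: "(T^^i) x \<notin> K" if "i < j" for i
        using not_less_Least[OF that[unfolded j_def]] j(1) that by auto
      define m where "m = n - j"
      have m: "1 \<le> m" "m \<le> n" using j(1) by (auto simp: m_def)
      from F[OF m] j(2) obtain b where b: "b \<in> F m" "(T^^j) x \<in> b" by blast
      have bb: "b \<in> bowen_balls d T m \<delta>" using F[OF m] b(1) by blast
      have bset: "{y. bowen_dist d T m (ctr m b) y < \<delta>} = b" by (rule sym[OF ctr[OF bb]])
      have "(T^^j) x \<in> {y. bowen_dist d T m (ctr m b) y < \<delta>}" unfolding bset by (rule b(2))
      then have "bowen_dist d T m (ctr m b) ((T^^j) x) < \<delta>" by simp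
      then have closeall: "\<forall>i'<m. d ((T^^i') (ctr m b)) ((T^^i') ((T^^j) x)) < \<delta>"
        by (rule iffD1[OF bowen_mem[OF m(1)]])
      have close: "d ((T^^i') (ctr m b)) ((T^^i') ((T^^j) x)) < \<delta>" if "i' < m" for i'
        using closeall that by blast
      have "x \<in> S j b"
        unfolding S_def
      proof (rule INT_I)
        fix i assume i: "i \<in> {..<n}"
        show "x \<in> (T^^i) -` Wf j b i"
        proof (cases "i < j")
          case True
          then show ?thesis using before[OF True] U(2) by (auto simp: Wf_def)
        next
          case False
          define i' where "i' = i - j"
          have i'm: "i' < m" using i False by (auto simp: i'_def m_def)
          have eq: "(T^^i') ((T^^j) x) = (T^^i) x"
            using False by (simp add: i'_def funpow_add[symmetric, THEN fun_cong, simplified])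
          have "(T^^i) x \<in> W ((T^^i') (ctr m b))" using close[OF i'm] eq W by auto
          then show ?thesis using False by (simp add: Wf_def i'_def m_def)
        qed
      qed
      moreover have "S j b \<in> G" using b(1) j(1) \<open>x \<in> S j b\<close> by (auto simp: G_def m_def)
      ultimately show ?thesis by blast
    qed
  qed
  have finF: "finite (F (n-j))" if "j < n" for j using F[of "n-j"] that by auto
  have fin: "finite G" unfolding G_def using finF by auto
  have "card G \<le> card ({Sinf} \<union> (\<Union>j<n. S j ` F (n-j)))"
    unfolding G_def using finF by (intro card_mono) auto
  also have "\<dots> \<le> card {Sinf} + card (\<Union>j<n. S j ` F (n-j))" by (rule card_Un_le)
  also have "card (\<Union>j<n. S j ` F (n-j)) \<le> (\<Sum>j<n. card (S j ` F (n-j)))" by (rule card_UN_le) simp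
  also have "\<dots> \<le> (\<Sum>j<n. card (F (n-j)))" by (intro sum_mono card_image_le finF) simp
  finally have "card G \<le> 1 + (\<Sum>j<n. card (F (n-j)))" by simp
  then show ?thesis using sub cov fin by blast
qed

lemma join_inter:
  fixes T :: "'a \<Rightarrow> 'a"
  shows "(\<Inter>i<m. (T^^i) -` f i) \<inter> (T^^m) -` (\<Inter>i<n. (T^^i) -` g i) =
         (\<Inter>i<m+n. (T^^i) -` (if i < m then f i else g (i - m)))"
proof (rule set_eqI)
  fix x
  have fp: "(T^^i) ((T^^m) x) = (T^^(i+m)) x" for i by (simp add: funpow_add)
  show "x \<in> (\<Inter>i<m. (T^^i) -` f i) \<inter> (T^^m) -` (\<Inter>i<n. (T^^i) -` g i) \<longleftrightarrow>
        x \<in> (\<Inter>i<m+n. (T^^i) -` (if i < m then f i else g (i - m)))"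
  proof
    assume x: "x \<in> (\<Inter>i<m. (T^^i) -` f i) \<inter> (T^^m) -` (\<Inter>i<n. (T^^i) -` g i)"
    show "x \<in> (\<Inter>i<m+n. (T^^i) -` (if i < m then f i else g (i - m)))"
    proof (rule INT_I)
      fix i assume i: "i \<in> {..<m+n}"
      show "x \<in> (T^^i) -` (if i < m then f i else g (i - m))"
      proof (cases "i < m")
        case True then show ?thesis using x by auto
      next
        case False
        then have im: "i - m < n" "i - m + m = i" using i by auto
        have "(T^^(i-m)) ((T^^m) x) \<in> g (i-m)" using x im(1) by auto
        moreover have "(T^^(i-m)) ((T^^m) x) = (T^^i) x" using fp[of "i-m"] im(2) by simp
        ultimately show ?thesis using False by simp
      qed
    qed
  next
    assume x: "x \<in> (\<Inter>i<m+n. (T^^i) -` (if i < m then f i else g (i - m)))"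
    have xi: "x \<in> (T^^i) -` (if i < m then f i else g (i - m))" if "i < m+n" for i
      using x that by blast
    have "x \<in> (T^^i) -` f i" if "i < m" for i using xi[of i] that by simp
    moreover have "(T^^i) ((T^^m) x) \<in> g i" if "i < n" for i
      using xi[of "i+m"] that fp[of i] by simp
    ultimately show "x \<in> (\<Inter>i<m. (T^^i) -` f i) \<inter> (T^^m) -` (\<Inter>i<n. (T^^i) -` g i)"
      by auto
  qed
qed

lemma subadd_cover:
  fixes T :: "'a \<Rightarrow> 'a"
  assumes m: "m \<ge> 1" and n: "n \<ge> 1"
    and B: "B \<subseteq> cover_pow T A m" "UNIV \<subseteq> \<Union>B" "finite B"
    and C: "C \<subseteq> cover_pow T A n" "UNIV \<subseteq> \<Union>C" "finite C"
  shows "\<exists>G. G \<subseteq> cover_pow T A (m+n) \<and> UNIV \<subseteq> \<Union>G \<and> finite G \<and> card G \<le> card B * card C"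
proof -
  define G where "G = (\<lambda>(b,c). b \<inter> (T^^m) -` c) ` (B \<times> C) - {{}}"
  obtain m' where m': "m = Suc m'" using m by (cases m) auto
  obtain n' where n': "n = Suc n'" using n by (cases n) auto
  have sub: "G \<subseteq> cover_pow T A (m+n)"
  proof
    fix g assume g: "g \<in> G"
    then obtain b c where bc: "b \<in> B" "c \<in> C" "g = b \<inter> (T^^m) -` c" "g \<noteq> {}"
      by (auto simp: G_def)
    obtain f where f: "\<forall>i<m. f i \<in> A" "b = (\<Inter>i<m. (T^^i) -` f i)"
      using cover_pow_L1[of b T A m'] bc(1) B(1) m' by auto
    obtain h where h: "\<forall>i<n. h i \<in> A" "c = (\<Inter>i<n. (T^^i) -` h i)"
      using cover_pow_L1[of c T A n'] bc(2) C(1) n' by auto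
    have eq: "g = (\<Inter>i<Suc (m'+n). (T^^i) -` (if i < m then f i else h (i - m)))"
      using bc(3) join_inter[where T=T and m=m and f=f and n=n and g=h] unfolding f(2) h(2) by (simp add: m')
    have "(\<lambda>i. if i < m then f i else h (i - m)) i \<in> A" if "i < Suc (m' + n)" for i
      using f(1) h(1) that m' by auto
    then have "g \<in> cover_pow T A (Suc (m'+n))"
      using cover_pow_L2[of "m'+n" "\<lambda>i. if i < m then f i else h (i - m)" A T] bc(4) eq by auto
    then show "g \<in> cover_pow T A (m+n)" by (simp add: m')
  qed
  have cov: "UNIV \<subseteq> \<Union>G"
  proof
    fix x :: 'a
    obtain b where b: "b \<in> B" "x \<in> b" using B(2) by blast
    obtain c where c: "c \<in> C" "(T^^m) x \<in> c" using C(2) by blast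
    have "x \<in> b \<inter> (T^^m) -` c" using b c by auto
    moreover have "b \<inter> (T^^m) -` c \<in> G" using b c by (auto simp: G_def)
    ultimately show "x \<in> \<Union>G" by blast
  qed
  have fin: "finite G" unfolding G_def using B(3) C(3) by auto
  have "card G \<le> card ((\<lambda>(b,c). b \<inter> (T^^m) -` c) ` (B \<times> C))"
    unfolding G_def using B(3) C(3) by (intro card_mono) auto
  also have "\<dots> \<le> card (B \<times> C)" by (rule card_image_le) (use B(3) C(3) in auto)
  also have "\<dots> = card B * card C" by (rule card_cartesian_product)
  finally show ?thesis using sub cov fin by blast
qed

lemma part2:
  fixes T :: "'a::topological_space \<Rightarrow> 'a" and d :: "'a \<Rightarrow> 'a \<Rightarrow> real"
  shows "bowen_entropy d T \<le> metric_entropy d T"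
  unfolding bowen_entropy_def
proof (rule SUP_least)
  fix p :: "real \<times> 'a set" assume p: "p \<in> {0<..} \<times> {K. compact K}"
  then obtain e K where pe: "p = (e, K)" "e > 0" by auto
  have "limsup (\<lambda>n. elog (N_K K (bowen_balls d T n e)) / ereal (real n))
      \<le> limsup (\<lambda>n. elog (N_cov (bowen_balls d T n e)) / ereal (real n))"
  proof (rule Limsup_mono)
    show "\<forall>\<^sub>F n in sequentially. elog (N_K K (bowen_balls d T n e)) / ereal (real n)
      \<le> elog (N_cov (bowen_balls d T n e)) / ereal (real n)"
      unfolding eventually_sequentially
      by (intro exI[of _ 1] allI impI ereal_divide_right_mono elog_mono)
         (auto simp: N_cov_def intro: N_K_superset_le)
  qed
  also have "\<dots> \<le> metric_entropy d T" unfolding metric_entropy_def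
    using pe(2) by (intro SUP_upper) auto
  finally show "(\<lambda>(e::real, K). limsup (\<lambda>n. elog (N_K K (bowen_balls d T n e)) / ereal (real n))) p
       \<le> metric_entropy d T" by (simp add: pe)
qed

lemma elog_ereal: "x > 0 \<Longrightarrow> elog (ereal x) = ereal (ln x)"
  by (simp add: elog_def)

lemma finite_case:
  fixes T :: "'a \<Rightarrow> 'a"
  assumes fin: "\<And>m. m \<ge> 1 \<Longrightarrow> N_K K (bowen_balls d T m \<delta>) \<noteq> \<infinity>"
    and Kne: "K \<noteq> {}"
    and U: "U \<in> A" "-K \<subseteq> U"
    and W: "\<And>z. W z \<in> A \<and> {y. d z y < \<delta>} \<subseteq> W z"
  shows "lim (\<lambda>n. elog (N_cov (cover_pow T A n)) / ereal (real n))
     \<le> limsup (\<lambda>n. elog (N_K K (bowen_balls d T n \<delta>)) / ereal (real n))"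
proof -
  define nk where "nk m = real_of_ereal (N_K K (bowen_balls d T m \<delta>))" for m
  have nkE: "N_K K (bowen_balls d T m \<delta>) = ereal (nk m) \<and> 1 \<le> nk m" if "m \<ge> 1" for m
  proof -
    have 1: "1 \<le> N_K K (bowen_balls d T m \<delta>)" using N_K_ge1[OF Kne] .
    then show ?thesis using fin[OF that] unfolding nk_def
      by (cases "N_K K (bowen_balls d T m \<delta>)") auto
  qed
  have nkmono: "nk m \<le> nk n" if "1 \<le> m" "m \<le> n" for m n
    using N_K_bowen_mono[OF that, of K d T \<delta>] nkE[of m] nkE[of n] that by auto
  define F where "F m = (SOME B. B \<subseteq> bowen_balls d T m \<delta> \<and> K \<subseteq> \<Union>B \<and> finite B \<and>
      N_K K (bowen_balls d T m \<delta>) = ereal (card B))" for m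
  have F: "F m \<subseteq> bowen_balls d T m \<delta> \<and> K \<subseteq> \<Union>(F m) \<and> finite (F m) \<and> real (card (F m)) = nk m"
    if "m \<ge> 1" for m
  proof -
    have "F m \<subseteq> bowen_balls d T m \<delta> \<and> K \<subseteq> \<Union>(F m) \<and> finite (F m) \<and>
      N_K K (bowen_balls d T m \<delta>) = ereal (card (F m))"
      unfolding F_def by (rule someI_ex) (rule N_K_attained[OF fin[OF that]])
    then show ?thesis using nkE[OF that] by auto
  qed
  define a where "a n = real_of_ereal (N_cov (cover_pow T A n))" for n
  have aE: "N_cov (cover_pow T A n) = ereal (a n) \<and> 1 \<le> a n \<and> (n \<ge> 1 \<longrightarrow> a n \<le> 1 + real n * nk n)" for n
  proof (cases "n = 0")
    case True
    then show ?thesis using N_cov_0[of T A] by (simp add: a_def)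
  next
    case False
    then have n1: "n \<ge> 1" by simp
    obtain G where G: "G \<subseteq> cover_pow T A n" "UNIV \<subseteq> \<Union>G" "finite G"
        "card G \<le> 1 + (\<Sum>j<n. card (F (n-j)))"
      using count_bound[OF n1, of F d T \<delta> K U A W] F U W by auto
    have "real (\<Sum>j<n. card (F (n-j))) = (\<Sum>j<n. nk (n-j))"
      using F by (simp add: of_nat_sum)
    also have "\<dots> \<le> (\<Sum>j<n. nk n)" by (intro sum_mono nkmono) auto
    also have "\<dots> = real n * nk n" by simp
    finally have cG: "real (card G) \<le> 1 + real n * nk n" using G(4)
      by (smt (verit) of_nat_add of_nat_le_iff of_nat_1)
    have le: "N_cov (cover_pow T A n) \<le> ereal (real (card G))"
      using N_K_le[OF G(1), of UNIV] G(2,3) by (simp add: N_cov_def ecard_def)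
    have ge: "1 \<le> N_cov (cover_pow T A n)" unfolding N_cov_def by (rule N_K_ge1) simp
    obtain r where r: "N_cov (cover_pow T A n) = ereal r" using le ge
      by (cases "N_cov (cover_pow T A n)") auto
    then show ?thesis using le ge cG n1 by (auto simp: a_def)
  qed
  have asub: "a (m+n) \<le> a m * a n" for m n
  proof (cases "m = 0 \<or> n = 0")
    case True
    have "a 0 = 1" using N_cov_0[of T A] by (simp add: a_def)
    then show ?thesis using True by auto
  next
    case False
    then have m1: "m \<ge> 1" and n1: "n \<ge> 1" by auto
    obtain B where B: "B \<subseteq> cover_pow T A m" "UNIV \<subseteq> \<Union>B" "finite B" "N_cov (cover_pow T A m) = ereal (card B)"
      using N_K_attained[of UNIV "cover_pow T A m"] aE[of m] by (auto simp: N_cov_def)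
    obtain C where C: "C \<subseteq> cover_pow T A n" "UNIV \<subseteq> \<Union>C" "finite C" "N_cov (cover_pow T A n) = ereal (card C)"
      using N_K_attained[of UNIV "cover_pow T A n"] aE[of n] by (auto simp: N_cov_def)
    obtain G where G: "G \<subseteq> cover_pow T A (m+n)" "UNIV \<subseteq> \<Union>G" "finite G" "card G \<le> card B * card C"
      using subadd_cover[OF m1 n1 B(1-3) C(1-3)] by blast
    have "N_cov (cover_pow T A (m+n)) \<le> ereal (card G)"
      using N_K_le[OF G(1), of UNIV] G(2,3) by (simp add: N_cov_def ecard_def)
    then have "a (m+n) \<le> real (card G)" using aE[of "m+n"] by simp
    also have "\<dots> \<le> real (card B) * real (card C)" using G(4) by (metis of_nat_le_iff of_nat_mult)
    also have "\<dots> = a m * a n" using B(4) C(4) aE[of m] aE[of n] by simp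
    finally show ?thesis .
  qed
  define u where "u n = ln (a n)" for n
  have u0: "u n \<ge> 0" for n using aE[of n] by (simp add: u_def)
  have usub: "u (m+n) \<le> u m + u n" for m n
  proof -
    have "u (m+n) \<le> ln (a m * a n)" unfolding u_def using asub[of m n] aE[of "m+n"] by simp
    also have "\<dots> = u m + u n" unfolding u_def using aE[of m] aE[of n] by (simp add: ln_mult)
    finally show ?thesis .
  qed
  obtain l where l: "(\<lambda>n. u n / real n) \<longlonglongrightarrow> l"
    using fekete[of u, OF usub u0] by (auto simp: convergent_def)
  have feq: "elog (N_cov (cover_pow T A n)) / ereal (real n) = ereal (u n / real n)" if "n \<ge> 1" for n
    using aE[of n] that by (simp add: u_def elog_ereal)
  have "(\<lambda>n. elog (N_cov (cover_pow T A n)) / ereal (real n)) \<longlonglongrightarrow> ereal l"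
  proof -
    have "(\<lambda>n. ereal (u n / real n)) \<longlonglongrightarrow> ereal l" using l by (rule tendsto_ereal)
    moreover have "\<forall>\<^sub>F n in sequentially. ereal (u n / real n) = elog (N_cov (cover_pow T A n)) / ereal (real n)"
      unfolding eventually_sequentially using feq by (intro exI[of _ 1]) auto
    ultimately show ?thesis by (rule Lim_transform_eventually)
  qed
  then have limeq: "lim (\<lambda>n. elog (N_cov (cover_pow T A n)) / ereal (real n)) = ereal l"
    by (rule limI)
  define g where "g n = elog (N_K K (bowen_balls d T n \<delta>)) / ereal (real n)" for n
  have geq: "g n = ereal (ln (nk n) / real n)" if "n \<ge> 1" for n
    using nkE[OF that] that by (simp add: g_def elog_ereal)
  define s where "s = limsup g"
  have s0: "0 \<le> s" unfolding s_def
  proof (rule le_Limsup)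
    show "\<forall>\<^sub>F n in sequentially. 0 \<le> g n"
      unfolding eventually_sequentially using geq nkE by (intro exI[of _ 1]) auto
  qed simp
  have key: "l \<le> c" if c: "c > 0" "ereal c > s" for c
  proof -
    have "\<forall>\<^sub>F n in sequentially. g n < ereal c" using c(2) unfolding s_def by (rule Limsup_lessD)
    then obtain n0' where n0': "\<And>n. n \<ge> n0' \<Longrightarrow> g n < ereal c" by (auto simp: eventually_sequentially)
    define n0 where "n0 = max n0' 1"
    have big: "nk n \<le> exp (c * real n)" if "n \<ge> n0" for n
    proof -
      have n1: "n \<ge> 1" "n \<ge> n0'" using that by (auto simp: n0_def)
      have "ln (nk n) / real n < c" using n0'[OF n1(2)] geq[OF n1(1)] by simp
      then have "ln (nk n) < c * real n" using n1(1) by (simp add: field_simps)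
      then have "exp (ln (nk n)) < exp (c * real n)" by simp
      then show ?thesis using nkE[OF n1(1)] by simp
    qed
    define E where "E = exp (c * real n0)"
    have E1: "1 \<le> E" unfolding E_def using c(1) by simp
    have nkb: "nk n \<le> E * exp (c * real n)" if "n \<ge> 1" for n
    proof (cases "n \<ge> n0")
      case True
      then show ?thesis using big[OF True] E1
        by (smt (verit) exp_gt_zero mult_le_cancel_right1)
    next
      case False
      then have "nk n \<le> nk n0" using that by (intro nkmono) auto
      also have "\<dots> \<le> E" using big[of n0] by (simp add: E_def)
      also have "\<dots> \<le> E * exp (c * real n)" using E1 c(1) by simp
      finally show ?thesis .
    qed
    have ub: "u n / real n \<le> c + (ln (real n) / real n + (ln 2 + ln E) / real n)" if "n \<ge> 1" for n
    proof -
      have ec: "1 \<le> exp (c * real n)" using c(1) by simp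
      have ex1: "1 \<le> E * exp (c * real n)" using mult_mono[OF E1 ec] E1 by simp
      have "a n \<le> 1 + real n * nk n" using aE[of n] that by simp
      also have "\<dots> \<le> 1 + real n * (E * exp (c * real n))"
        using nkb[OF that] by (simp add: mult_left_mono)
      also have "\<dots> \<le> (2 * real n) * (E * exp (c * real n))"
      proof -
        have n1r: "1 \<le> real n" using that by simp
        have "1 \<le> real n * (E * exp (c * real n))" using mult_mono[OF n1r ex1] by simp
        then show ?thesis by (simp add: algebra_simps)
      qed
      finally have an: "a n \<le> (2 * real n) * (E * exp (c * real n))" .
      have Epos: "E > 0" using E1 by simp
      have apos: "0 < a n" using aE[of n] by simp
      have rpos: "0 < (2 * real n) * (E * exp (c * real n))" using apos an by linarith
      have "u n \<le> ln ((2 * real n) * (E * exp (c * real n)))"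
        unfolding u_def using ln_le_cancel_iff[OF apos rpos] an by simp
      also have "\<dots> = ln 2 + ln (real n) + ln E + c * real n"
        using Epos that by (simp add: ln_mult)
      finally have "u n \<le> ln 2 + ln (real n) + ln E + c * real n" .
      then show ?thesis using that by (simp add: field_simps)
    qed
    have lim2: "(\<lambda>n. c + (ln (real n) / real n + (ln 2 + ln E) / real n)) \<longlonglongrightarrow> c"
    proof -
      have "(\<lambda>n. c + (ln (real n) / real n + (ln 2 + ln E) / real n)) \<longlonglongrightarrow> c + (0 + 0)"
        by (rule tendsto_add[OF tendsto_const tendsto_add[OF lim_ln_over_n lim_const_over_n]])
      then show ?thesis by simp
    qed
    show "l \<le> c"
    proof (rule LIMSEQ_le[OF l lim2])
      show "\<exists>N. \<forall>n\<ge>N. u n / real n \<le> c + (ln (real n) / real n + (ln 2 + ln E) / real n)"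
        using ub by (intro exI[of _ 1]) auto
    qed
  qed
  have "ereal l \<le> s"
  proof (cases s)
    case (real s')
    have "l \<le> s'"
    proof (rule field_le_epsilon)
      fix e :: real assume e: "e > 0"
      have "s' \<ge> 0" using s0 real by simp
      then show "l \<le> s' + e" using key[of "s' + e"] e real by simp
    qed
    then show ?thesis using real by simp
  qed (use s0 in auto)
  then show ?thesis using limeq by (simp add: s_def g_def[abs_def])
qed

theorem proposition2p30:
  fixes T :: "'a::topological_space \<Rightarrow> 'a" and d :: "'a \<Rightarrow> 'a \<Rightarrow> real"
  assumes "Metric_space UNIV d"
    and "Metric_space.mtopology UNIV d = euclidean"
    and "continuous_on UNIV T"
  shows "top_entropy T \<le> bowen_entropy d T \<and> bowen_entropy d T \<le> metric_entropy d T"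
proof -
  have P2: "bowen_entropy d T \<le> metric_entropy d T" by (rule part2)
  have P1: "top_entropy T \<le> bowen_entropy d T" unfolding top_entropy_def
  proof (rule SUP_least)
    fix A :: "'a set set" assume "A \<in> {A. admissible_cover A}"
    then have Aop: "\<forall>V\<in>A. open V" and AU: "\<Union>A = UNIV" and "\<exists>U\<in>A. compact (- U)"
      by (auto simp: admissible_cover_def)
    then obtain U where U: "U \<in> A" "compact (-U)" by blast
    define K where "K = insert undefined (-U)"
    have Kc: "compact K" using U(2) by (simp add: K_def compact_insert)
    have Kne: "K \<noteq> {}" by (simp add: K_def)
    have KU: "-K \<subseteq> U" by (auto simp: K_def)
    obtain \<delta> where \<delta>: "\<delta> > 0" "\<forall>x. \<exists>V\<in>A. {y. d x y < \<delta>} \<subseteq> V"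
      using lebesgue[OF assms(1,2) Kc Kne Aop AU U(1) KU] by blast
    have "\<forall>z. \<exists>V. V \<in> A \<and> {y. d z y < \<delta>} \<subseteq> V" using \<delta>(2) by blast
    then obtain W where W: "\<And>z. W z \<in> A \<and> {y. d z y < \<delta>} \<subseteq> W z" by metis
    have sle: "limsup (\<lambda>n. elog (N_K K (bowen_balls d T n \<delta>)) / ereal (real n)) \<le> bowen_entropy d T"
    proof -
      have mem: "(\<delta>, K) \<in> {0<..} \<times> {K. compact K}" using \<delta>(1) Kc by auto
      show ?thesis unfolding bowen_entropy_def
        using SUP_upper[OF mem, of "\<lambda>(e, K). limsup (\<lambda>n. elog (N_K K (bowen_balls d T n e)) / ereal (real n))"]
        by simp
    qed
    show "lim (\<lambda>n. elog (N_cov (cover_pow T A n)) / ereal (real n)) \<le> bowen_entropy d T"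
    proof (cases "\<exists>m\<ge>1. N_K K (bowen_balls d T m \<delta>) = \<infinity>")
      case False
      then have fin: "\<And>m. m \<ge> 1 \<Longrightarrow> N_K K (bowen_balls d T m \<delta>) \<noteq> \<infinity>" by blast
      show ?thesis by (rule order.trans[OF finite_case[OF fin Kne U(1) KU W] sle])
    next
      case True
      then obtain m where m: "m \<ge> 1" "N_K K (bowen_balls d T m \<delta>) = \<infinity>" by blast
      have ev: "\<forall>\<^sub>F n in sequentially. elog (N_K K (bowen_balls d T n \<delta>)) / ereal (real n) = \<infinity>"
        unfolding eventually_sequentially
      proof (intro exI allI impI)
        fix n assume n: "n \<ge> m"
        have "\<infinity> \<le> N_K K (bowen_balls d T n \<delta>)"
          using N_K_bowen_mono[OF m(1) n, of K d T \<delta>] m(2) by simp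
        then have inf: "N_K K (bowen_balls d T n \<delta>) = \<infinity>" by simp
        have npos: "real n > 0" using n m by simp
        show "elog (N_K K (bowen_balls d T n \<delta>)) / ereal (real n) = \<infinity>"
          using npos by (simp add: inf elog_def)
      qed
      have "limsup (\<lambda>n. elog (N_K K (bowen_balls d T n \<delta>)) / ereal (real n)) = \<infinity>"
        using Limsup_eq[OF ev] Limsup_const[of sequentially "\<infinity>::ereal"] by simp
      then have "bowen_entropy d T = \<infinity>" using sle by simp
      then show ?thesis by simp
    qed
  qed
  show ?thesis using P1 P2 by simp
qed

end
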